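(* The axioms (S1)–(S5) are independent: for each $i\in\{1,2,3,4,5\}$ there is a structure $\langle M,\mathsf{S}\rangle$, with $M$ a non-empty set and $\mathsf{S}\subseteq M\times\mathcal{P}(M)$, that satisfies every axiom (S$j$) with $j\neq i$ but does not satisfy (S$i$).
   Context: For a set $M$ and a relation $\mathsf{S}\subseteq M\times\mathcal{P}(M)$ define: $x\sqsubseteq_{\mathsf{S}} y$ iff there is $X\subseteq M$ with $y\,\mathsf{S}\,X$ and $x\in X$; $\mathrm{I}(x)=\{y\in M\mid y\sqsubseteq_{\mathsf{S}} x\}$ and for $A\subseteq M$, $\mathrm{I}(A)=\bigcup_{a\in A}\mathrm{I}(a)$; $x$ s-overlaps $y$ iff there are $X,Y\subseteq M$ with $x\,\mathsf{S}\,X$, $y\,\mathsf{S}\,Y$, $X\cap Y\neq\emptyset$; a set $A\subseteq M$ is pre-dense in $B\subseteq M$ iff for every $b\in B$ there is $a\in A$ such that $a$ s-overlaps $b$. Axioms (all variables range over $M$, capital letters over subsets of $M$): (S1) for every non-empty $X\subseteq M$ there is $x\in M$ with $x\,\mathsf{S}\,X$; (S2) $x\,\mathsf{S}\,X\wedge y\,\mathsf{S}\,X\to x=y$; (S3) $x\,\mathsf{S}\,X\wedge y\,\mathsf{S}\,Y\wedge x\in Y\to y\,\mathsf{S}\,(X\cup Y)$; (S4) if $x\,\mathsf{S}\,X$, $x\,\mathsf{S}\,Y$ and $y\in Y$, then there are $z\in X$ and $Z,U\subseteq M$ with $z\,\mathsf{S}\,Z$, $y\,\mathsf{S}\,U$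 and $Z\cap U\neq\emptyset$; (S5) for all $x\in M$ and $X\subseteq M$: if $X$ is pre-dense in $\mathrm{I}(x)$ then $x\,\mathsf{S}\,(\mathrm{I}(x)\cap\mathrm{I}(X))$. *)

theory Defs
  imports Main
begin

definition is_structure :: "'a set \<Rightarrow> ('a \<Rightarrow> 'a set \<Rightarrow> bool) \<Rightarrow> bool" where
  "is_structure M S \<longleftrightarrow> M \<noteq> {} \<and> (\<forall>x X. S x X \<longrightarrow> x \<in> M \<and> X \<subseteq> M)"

definition ingr :: "'a set \<Rightarrow> ('a \<Rightarrow> 'a set \<Rightarrow> bool) \<Rightarrow> 'a \<Rightarrow> 'a \<Rightarrow> bool" where
  "ingr M S x y \<longleftrightarrow> (\<exists>X. X \<subseteq> M \<and> S y X \<and> x \<in> X)"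

definition Iel :: "'a set \<Rightarrow> ('a \<Rightarrow> 'a set \<Rightarrow> bool) \<Rightarrow> 'a \<Rightarrow> 'a set" where
  "Iel M S x = {y \<in> M. ingr M S y x}"

definition Iset :: "'a set \<Rightarrow> ('a \<Rightarrow> 'a set \<Rightarrow> bool) \<Rightarrow> 'a set \<Rightarrow> 'a set" where
  "Iset M S A = (\<Union>a\<in>A. Iel M S a)"

definition s_overlaps :: "'a set \<Rightarrow> ('a \<Rightarrow> 'a set \<Rightarrow> bool) \<Rightarrow> 'a \<Rightarrow> 'a \<Rightarrow> bool" where
  "s_overlaps M S x y \<longleftrightarrow> (\<exists>X Y. X \<subseteq> M \<and> Y \<subseteq> M \<and> S x X \<and> S y Y \<and> X \<inter> Y \<noteq> {})"

definition pre_dense :: "'a set \<Rightarrow> ('a \<Rightarrow> 'a set \<Rightarrow> bool) \<Rightarrow> 'a set \<Rightarrow> 'a set \<Rightarrow> bool" where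
  "pre_dense M S A B \<longleftrightarrow> (\<forall>b\<in>B. \<exists>a\<in>A. s_overlaps M S a b)"

definition S1 :: "'a set \<Rightarrow> ('a \<Rightarrow> 'a set \<Rightarrow> bool) \<Rightarrow> bool" where
  "S1 M S \<longleftrightarrow> (\<forall>X. X \<subseteq> M \<and> X \<noteq> {} \<longrightarrow> (\<exists>x\<in>M. S x X))"

definition S2 :: "'a set \<Rightarrow> ('a \<Rightarrow> 'a set \<Rightarrow> bool) \<Rightarrow> bool" where
  "S2 M S \<longleftrightarrow> (\<forall>x\<in>M. \<forall>y\<in>M. \<forall>X. X \<subseteq> M \<longrightarrow> S x X \<and> S y X \<longrightarrow> x = y)"

definition S3 :: "'a set \<Rightarrow> ('a \<Rightarrow> 'a set \<Rightarrow> bool) \<Rightarrow> bool" where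
  "S3 M S \<longleftrightarrow> (\<forall>x\<in>M. \<forall>y\<in>M. \<forall>X Y. X \<subseteq> M \<longrightarrow> Y \<subseteq> M \<longrightarrow>
      S x X \<and> S y Y \<and> x \<in> Y \<longrightarrow> S y (X \<union> Y))"

definition S4 :: "'a set \<Rightarrow> ('a \<Rightarrow> 'a set \<Rightarrow> bool) \<Rightarrow> bool" where
  "S4 M S \<longleftrightarrow> (\<forall>x\<in>M. \<forall>y\<in>M. \<forall>X Y. X \<subseteq> M \<longrightarrow> Y \<subseteq> M \<longrightarrow>
      S x X \<and> S x Y \<and> y \<in> Y \<longrightarrow>
      (\<exists>z\<in>X. \<exists>Z U. Z \<subseteq> M \<and> U \<subseteq> M \<and> S z Z \<and> S y U \<and> Z \<inter> U \<noteq> {}))"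

definition S5 :: "'a set \<Rightarrow> ('a \<Rightarrow> 'a set \<Rightarrow> bool) \<Rightarrow> bool" where
  "S5 M S \<longleftrightarrow> (\<forall>x\<in>M. \<forall>X. X \<subseteq> M \<longrightarrow>
      pre_dense M S X (Iel M S x) \<longrightarrow> S x (Iel M S x \<inter> Iset M S X))"

definition Sax :: "nat \<Rightarrow> 'a set \<Rightarrow> ('a \<Rightarrow> 'a set \<Rightarrow> bool) \<Rightarrow> bool" where
  "Sax i M S = (if i = 1 then S1 M S else if i = 2 then S2 M S else if i = 3 then S3 M S
               else if i = 4 then S4 M S else S5 M S)"

end

theory Submission imports Defs begin
lemma neq_by: "(a::nat) : B ==> a ~: A ==> A ~= B" by blast
lemma neq_by2: "(a::nat) : A ==> a ~: B ==> A ~= B" by blast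

definition M1 :: "nat set" where "M1 = ({0}::nat set)"
definition S1m :: "nat => nat set => bool" where "S1m x X = ((x = 0 & X = ({}::nat set)))"
lemma mem1: "x : M1 \<longleftrightarrow> (x = 0)" by (auto simp: M1_def)
lemma sub1: "X <= M1 ==> (X = ({}::nat set)) | (X = ({0}::nat set))"
proof -
  assume "X <= M1"
  hence "X : Pow ({0}::nat set)" by (simp add: M1_def)
  thus ?thesis by (simp add: Pow_insert insert_commute; (elim disjE; simp))
qed
lemma str1: "is_structure M1 S1m" by (auto simp: is_structure_def M1_def S1m_def)
lemma neq1_0: "({}::nat set) ~= ({0}::nat set)" by (rule neq_by[of 0]) simp_all
lemma neq1_1: "({0}::nat set) ~= ({}::nat set)" by (rule neq_by2[of 0]) simp_all
lemmas neq1 = neq1_0 neq1_1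
lemma ingr1: "ingr M1 S1m y x \<longleftrightarrow> False"
  unfolding ingr_def S1m_def M1_def
  by (simp add: ex_disj_distrib conj_disj_distribL conj_disj_distribR; auto)
lemma I1: "Iel M1 S1m 0 = ({}::nat set)"
  unfolding Iel_def ingr1 by (auto simp: M1_def)
lemma ov1: "s_overlaps M1 S1m x y \<longleftrightarrow> False"
  unfolding s_overlaps_def S1m_def M1_def
  by (simp add: ex_disj_distrib conj_disj_distribL conj_disj_distribR; auto)
lemma notS1_1: "~ S1 M1 S1m"
proof
  assume H: "S1 M1 S1m"
  have "(EX x:M1. S1m x ({0}::nat set))"
    by (rule H[unfolded S1_def, rule_format, of "({0}::nat set)"]) (simp_all add: mem1 S1m_def I1 pre_dense_def ov1)
  thus False by (simp add: M1_def S1m_def I1 pre_dense_def ov1 Iset_def neq1)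
qed
lemma S2_1: "S2 M1 S1m"
  unfolding S2_def
proof (intro ballI allI impI)
  fix x y X assume "x : M1" "y : M1" "X <= M1" "S1m x X & S1m y X"
  thus "x = y" unfolding S1m_def by (elim conjE disjE; simp add: neq1)
qed
lemma S3_1: "S3 M1 S1m"
  unfolding S3_def S1m_def M1_def by auto
lemma S4_1: "S4 M1 S1m"
  unfolding S4_def
proof (intro ballI allI impI)
  fix x y X Y assume "x : M1" "y : M1" "X <= M1" "Y <= M1" "S1m x X & S1m x Y & y : Y"
  hence "EX z:X. s_overlaps M1 S1m z y" by (auto simp: S1m_def ov1)
  thus "EX z:X. EX Z U. Z <= M1 & U <= M1 & S1m z Z & S1m y U & Z Int U ~= {}"
    unfolding s_overlaps_def by blast
qed
lemma c1_0_: "pre_dense M1 S1m ({}::nat set) (Iel M1 S1m 0) ==> S1m 0 (Iel M1 S1m 0 Int Iset M1 S1m ({}::nat set))"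
proof -
  have "Iel M1 S1m 0 Int Iset M1 S1m ({}::nat set) = ({}::nat set)" by (simp add: I1 Iset_def; auto)
  moreover have "S1m 0 ({}::nat set)" by (simp add: S1m_def)
  ultimately show ?thesis by simp
qed
lemma c1_0_0: "pre_dense M1 S1m ({0}::nat set) (Iel M1 S1m 0) ==> S1m 0 (Iel M1 S1m 0 Int Iset M1 S1m ({0}::nat set))"
proof -
  have "Iel M1 S1m 0 Int Iset M1 S1m ({0}::nat set) = ({}::nat set)" by (simp add: I1 Iset_def; auto)
  moreover have "S1m 0 ({}::nat set)" by (simp add: S1m_def)
  ultimately show ?thesis by simp
qed
lemma S5_1: "S5 M1 S1m"
  unfolding S5_def
proof (intro ballI allI impI)
  fix x X assume x: "x : M1" and X: "X <= M1" and pd: "pre_dense M1 S1m X (Iel M1 S1m x)"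
  from x have x': "(x = 0)" by (simp add: M1_def)
  show "S1m x (Iel M1 S1m x Int Iset M1 S1m X)"
  proof -
    note xa = x'
    from sub1[OF X] show ?thesis proof (elim disjE)
      assume "X = ({}::nat set)"
      with xa pd show ?thesis by (simp only:) (erule c1_0_)
    next
      assume "X = ({0}::nat set)"
      with xa pd show ?thesis by (simp only:) (erule c1_0_0)
    qed
  qed
qed

definition M2 :: "nat set" where "M2 = ({0,3}::nat set)"
definition S2m :: "nat => nat set => bool" where "S2m x X = ((x = 0 & X = ({0}::nat set)) | (x = 0 & X = ({0,3}::nat set)) | (x = 0 & X = ({3}::nat set)) | (x = 3 & X = ({3}::nat set)))"
lemma mem2: "x : M2 \<longleftrightarrow> (x = 0) | (x = 3)" by (auto simp: M2_def)
lemma sub2: "X <= M2 ==> (X = ({}::nat set)) | (X = ({0}::nat set)) | (X = ({3}::nat set)) | (X = ({0,3}::nat set))"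
proof -
  assume "X <= M2"
  hence "X : Pow ({0,3}::nat set)" by (simp add: M2_def)
  thus ?thesis by (simp add: Pow_insert insert_commute; (elim disjE; simp))
qed
lemma str2: "is_structure M2 S2m" by (auto simp: is_structure_def M2_def S2m_def)
lemma neq2_0: "({}::nat set) ~= ({0}::nat set)" by (rule neq_by[of 0]) simp_all
lemma neq2_1: "({}::nat set) ~= ({3}::nat set)" by (rule neq_by[of 3]) simp_all
lemma neq2_2: "({}::nat set) ~= ({0,3}::nat set)" by (rule neq_by[of 0]) simp_all
lemma neq2_3: "({0}::nat set) ~= ({}::nat set)" by (rule neq_by2[of 0]) simp_all
lemma neq2_4: "({0}::nat set) ~= ({3}::nat set)" by (rule neq_by[of 3]) simp_all
lemma neq2_5: "({0}::nat set) ~= ({0,3}::nat set)" by (rule neq_by[of 3]) simp_all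
lemma neq2_6: "({3}::nat set) ~= ({}::nat set)" by (rule neq_by2[of 3]) simp_all
lemma neq2_7: "({3}::nat set) ~= ({0}::nat set)" by (rule neq_by[of 0]) simp_all
lemma neq2_8: "({3}::nat set) ~= ({0,3}::nat set)" by (rule neq_by[of 0]) simp_all
lemma neq2_9: "({0,3}::nat set) ~= ({}::nat set)" by (rule neq_by2[of 0]) simp_all
lemma neq2_10: "({0,3}::nat set) ~= ({0}::nat set)" by (rule neq_by2[of 3]) simp_all
lemma neq2_11: "({0,3}::nat set) ~= ({3}::nat set)" by (rule neq_by2[of 0]) simp_all
lemmas neq2 = neq2_0 neq2_1 neq2_2 neq2_3 neq2_4 neq2_5 neq2_6 neq2_7 neq2_8 neq2_9 neq2_10 neq2_11
lemma ingr2: "ingr M2 S2m y x \<longleftrightarrow> (y = 0 & x = 0) | (y = 3 & x = 0) | (y = 3 & x = 3)"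
  unfolding ingr_def S2m_def M2_def
  by (simp add: ex_disj_distrib conj_disj_distribL conj_disj_distribR; auto)
lemma I2: "Iel M2 S2m 0 = ({0,3}::nat set)" "Iel M2 S2m 3 = ({3}::nat set)"
  unfolding Iel_def ingr2 by (auto simp: M2_def)
lemma ov2: "s_overlaps M2 S2m x y \<longleftrightarrow> (x = 0 & y = 0) | (x = 0 & y = 3) | (x = 3 & y = 0) | (x = 3 & y = 3)"
  unfolding s_overlaps_def S2m_def M2_def
  by (simp add: ex_disj_distrib conj_disj_distribL conj_disj_distribR; auto)
lemma S1_2: "S1 M2 S2m"
  unfolding S1_def
proof (intro allI impI)
  fix X assume "X <= M2 & X ~= {}"
  hence "X <= M2" "X ~= {}" by auto
  from sub2[OF this(1)] this(2) show "EX x:M2. S2m x X"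
    by (elim disjE) (auto simp: M2_def S2m_def)
qed
lemma notS2_2: "~ S2 M2 S2m"
proof
  assume H: "S2 M2 S2m"
  have "(0::nat) = 3"
    by (rule H[unfolded S2_def, rule_format, of 0 3 "({3}::nat set)"]) (simp_all add: mem2 S2m_def I2 pre_dense_def ov2)
  thus False by (simp add: M2_def S2m_def I2 pre_dense_def ov2 Iset_def neq2)
qed
lemma S3_2: "S3 M2 S2m"
  unfolding S3_def S2m_def M2_def by auto
lemma S4_2: "S4 M2 S2m"
  unfolding S4_def
proof (intro ballI allI impI)
  fix x y X Y assume "x : M2" "y : M2" "X <= M2" "Y <= M2" "S2m x X & S2m x Y & y : Y"
  hence "EX z:X. s_overlaps M2 S2m z y" by (auto simp: S2m_def ov2)
  thus "EX z:X. EX Z U. Z <= M2 & U <= M2 & S2m z Z & S2m y U & Z Int U ~= {}"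
    unfolding s_overlaps_def by blast
qed
lemma c2_0_: "pre_dense M2 S2m ({}::nat set) (Iel M2 S2m 0) ==> S2m 0 (Iel M2 S2m 0 Int Iset M2 S2m ({}::nat set))"
by (auto simp: pre_dense_def I2 ov2)
lemma c2_0_0: "pre_dense M2 S2m ({0}::nat set) (Iel M2 S2m 0) ==> S2m 0 (Iel M2 S2m 0 Int Iset M2 S2m ({0}::nat set))"
proof -
  have "Iel M2 S2m 0 Int Iset M2 S2m ({0}::nat set) = ({0,3}::nat set)" by (simp add: I2 Iset_def; auto)
  moreover have "S2m 0 ({0,3}::nat set)" by (simp add: S2m_def)
  ultimately show ?thesis by simp
qed
lemma c2_0_3: "pre_dense M2 S2m ({3}::nat set) (Iel M2 S2m 0) ==> S2m 0 (Iel M2 S2m 0 Int Iset M2 S2m ({3}::nat set))"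
proof -
  have "Iel M2 S2m 0 Int Iset M2 S2m ({3}::nat set) = ({3}::nat set)" by (simp add: I2 Iset_def; auto)
  moreover have "S2m 0 ({3}::nat set)" by (simp add: S2m_def)
  ultimately show ?thesis by simp
qed
lemma c2_0_03: "pre_dense M2 S2m ({0,3}::nat set) (Iel M2 S2m 0) ==> S2m 0 (Iel M2 S2m 0 Int Iset M2 S2m ({0,3}::nat set))"
proof -
  have "Iel M2 S2m 0 Int Iset M2 S2m ({0,3}::nat set) = ({0,3}::nat set)" by (simp add: I2 Iset_def; auto)
  moreover have "S2m 0 ({0,3}::nat set)" by (simp add: S2m_def)
  ultimately show ?thesis by simp
qed
lemma c2_3_: "pre_dense M2 S2m ({}::nat set) (Iel M2 S2m 3) ==> S2m 3 (Iel M2 S2m 3 Int Iset M2 S2m ({}::nat set))"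
by (auto simp: pre_dense_def I2 ov2)
lemma c2_3_0: "pre_dense M2 S2m ({0}::nat set) (Iel M2 S2m 3) ==> S2m 3 (Iel M2 S2m 3 Int Iset M2 S2m ({0}::nat set))"
proof -
  have "Iel M2 S2m 3 Int Iset M2 S2m ({0}::nat set) = ({3}::nat set)" by (simp add: I2 Iset_def; auto)
  moreover have "S2m 3 ({3}::nat set)" by (simp add: S2m_def)
  ultimately show ?thesis by simp
qed
lemma c2_3_3: "pre_dense M2 S2m ({3}::nat set) (Iel M2 S2m 3) ==> S2m 3 (Iel M2 S2m 3 Int Iset M2 S2m ({3}::nat set))"
proof -
  have "Iel M2 S2m 3 Int Iset M2 S2m ({3}::nat set) = ({3}::nat set)" by (simp add: I2 Iset_def; auto)
  moreover have "S2m 3 ({3}::nat set)" by (simp add: S2m_def)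
  ultimately show ?thesis by simp
qed
lemma c2_3_03: "pre_dense M2 S2m ({0,3}::nat set) (Iel M2 S2m 3) ==> S2m 3 (Iel M2 S2m 3 Int Iset M2 S2m ({0,3}::nat set))"
proof -
  have "Iel M2 S2m 3 Int Iset M2 S2m ({0,3}::nat set) = ({3}::nat set)" by (simp add: I2 Iset_def; auto)
  moreover have "S2m 3 ({3}::nat set)" by (simp add: S2m_def)
  ultimately show ?thesis by simp
qed
lemma S5_2: "S5 M2 S2m"
  unfolding S5_def
proof (intro ballI allI impI)
  fix x X assume x: "x : M2" and X: "X <= M2" and pd: "pre_dense M2 S2m X (Iel M2 S2m x)"
  from x have x': "(x = 0) | (x = 3)" by (simp add: M2_def)
  show "S2m x (Iel M2 S2m x Int Iset M2 S2m X)"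
  using x' proof (elim disjE)
    assume xa: "x = 0"
    from sub2[OF X] show ?thesis proof (elim disjE)
      assume "X = ({}::nat set)"
      with xa pd show ?thesis by (simp only:) (erule c2_0_)
    next
      assume "X = ({0}::nat set)"
      with xa pd show ?thesis by (simp only:) (erule c2_0_0)
    next
      assume "X = ({3}::nat set)"
      with xa pd show ?thesis by (simp only:) (erule c2_0_3)
    next
      assume "X = ({0,3}::nat set)"
      with xa pd show ?thesis by (simp only:) (erule c2_0_03)
    qed
  next
    assume xa: "x = 3"
    from sub2[OF X] show ?thesis proof (elim disjE)
      assume "X = ({}::nat set)"
      with xa pd show ?thesis by (simp only:) (erule c2_3_)
    next
      assume "X = ({0}::nat set)"
      with xa pd show ?thesis by (simp only:) (erule c2_3_0)
    next
      assume "X = ({3}::nat set)"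
      with xa pd show ?thesis by (simp only:) (erule c2_3_3)
    next
      assume "X = ({0,3}::nat set)"
      with xa pd show ?thesis by (simp only:) (erule c2_3_03)
    qed
  qed
qed

definition M3 :: "nat set" where "M3 = ({0,2,3}::nat set)"
definition S3m :: "nat => nat set => bool" where "S3m x X = ((x = 0 & X = ({0}::nat set)) | (x = 0 & X = ({0,2,3}::nat set)) | (x = 0 & X = ({0,2}::nat set)) | (x = 0 & X = ({2,3}::nat set)) | (x = 3 & X = ({0,3}::nat set)) | (x = 3 & X = ({3}::nat set)) | (x = 2 & X = ({2}::nat set)))"
lemma mem3: "x : M3 \<longleftrightarrow> (x = 0) | (x = 2) | (x = 3)" by (auto simp: M3_def)
lemma sub3: "X <= M3 ==> (X = ({}::nat set)) | (X = ({0}::nat set)) | (X = ({2}::nat set)) | (X = ({3}::nat set)) | (X = ({0,2}::nat set)) | (X = ({0,3}::nat set)) | (X = ({2,3}::nat set)) | (X = ({0,2,3}::nat set))"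
proof -
  assume "X <= M3"
  hence "X : Pow ({0,2,3}::nat set)" by (simp add: M3_def)
  thus ?thesis by (simp add: Pow_insert insert_commute; (elim disjE; simp))
qed
lemma str3: "is_structure M3 S3m" by (auto simp: is_structure_def M3_def S3m_def)
lemma neq3_0: "({}::nat set) ~= ({0}::nat set)" by (rule neq_by[of 0]) simp_all
lemma neq3_1: "({}::nat set) ~= ({2}::nat set)" by (rule neq_by[of 2]) simp_all
lemma neq3_2: "({}::nat set) ~= ({3}::nat set)" by (rule neq_by[of 3]) simp_all
lemma neq3_3: "({}::nat set) ~= ({0,2}::nat set)" by (rule neq_by[of 0]) simp_all
lemma neq3_4: "({}::nat set) ~= ({0,3}::nat set)" by (rule neq_by[of 0]) simp_all
lemma neq3_5: "({}::nat set) ~= ({2,3}::nat set)" by (rule neq_by[of 2]) simp_all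
lemma neq3_6: "({}::nat set) ~= ({0,2,3}::nat set)" by (rule neq_by[of 0]) simp_all
lemma neq3_7: "({0}::nat set) ~= ({}::nat set)" by (rule neq_by2[of 0]) simp_all
lemma neq3_8: "({0}::nat set) ~= ({2}::nat set)" by (rule neq_by[of 2]) simp_all
lemma neq3_9: "({0}::nat set) ~= ({3}::nat set)" by (rule neq_by[of 3]) simp_all
lemma neq3_10: "({0}::nat set) ~= ({0,2}::nat set)" by (rule neq_by[of 2]) simp_all
lemma neq3_11: "({0}::nat set) ~= ({0,3}::nat set)" by (rule neq_by[of 3]) simp_all
lemma neq3_12: "({0}::nat set) ~= ({2,3}::nat set)" by (rule neq_by[of 2]) simp_all
lemma neq3_13: "({0}::nat set) ~= ({0,2,3}::nat set)" by (rule neq_by[of 2]) simp_all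
lemma neq3_14: "({2}::nat set) ~= ({}::nat set)" by (rule neq_by2[of 2]) simp_all
lemma neq3_15: "({2}::nat set) ~= ({0}::nat set)" by (rule neq_by[of 0]) simp_all
lemma neq3_16: "({2}::nat set) ~= ({3}::nat set)" by (rule neq_by[of 3]) simp_all
lemma neq3_17: "({2}::nat set) ~= ({0,2}::nat set)" by (rule neq_by[of 0]) simp_all
lemma neq3_18: "({2}::nat set) ~= ({0,3}::nat set)" by (rule neq_by[of 0]) simp_all
lemma neq3_19: "({2}::nat set) ~= ({2,3}::nat set)" by (rule neq_by[of 3]) simp_all
lemma neq3_20: "({2}::nat set) ~= ({0,2,3}::nat set)" by (rule neq_by[of 0]) simp_all
lemma neq3_21: "({3}::nat set) ~= ({}::nat set)" by (rule neq_by2[of 3]) simp_all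
lemma neq3_22: "({3}::nat set) ~= ({0}::nat set)" by (rule neq_by[of 0]) simp_all
lemma neq3_23: "({3}::nat set) ~= ({2}::nat set)" by (rule neq_by[of 2]) simp_all
lemma neq3_24: "({3}::nat set) ~= ({0,2}::nat set)" by (rule neq_by[of 0]) simp_all
lemma neq3_25: "({3}::nat set) ~= ({0,3}::nat set)" by (rule neq_by[of 0]) simp_all
lemma neq3_26: "({3}::nat set) ~= ({2,3}::nat set)" by (rule neq_by[of 2]) simp_all
lemma neq3_27: "({3}::nat set) ~= ({0,2,3}::nat set)" by (rule neq_by[of 0]) simp_all
lemma neq3_28: "({0,2}::nat set) ~= ({}::nat set)" by (rule neq_by2[of 0]) simp_all
lemma neq3_29: "({0,2}::nat set) ~= ({0}::nat set)" by (rule neq_by2[of 2]) simp_all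
lemma neq3_30: "({0,2}::nat set) ~= ({2}::nat set)" by (rule neq_by2[of 0]) simp_all
lemma neq3_31: "({0,2}::nat set) ~= ({3}::nat set)" by (rule neq_by[of 3]) simp_all
lemma neq3_32: "({0,2}::nat set) ~= ({0,3}::nat set)" by (rule neq_by[of 3]) simp_all
lemma neq3_33: "({0,2}::nat set) ~= ({2,3}::nat set)" by (rule neq_by[of 3]) simp_all
lemma neq3_34: "({0,2}::nat set) ~= ({0,2,3}::nat set)" by (rule neq_by[of 3]) simp_all
lemma neq3_35: "({0,3}::nat set) ~= ({}::nat set)" by (rule neq_by2[of 0]) simp_all
lemma neq3_36: "({0,3}::nat set) ~= ({0}::nat set)" by (rule neq_by2[of 3]) simp_all
lemma neq3_37: "({0,3}::nat set) ~= ({2}::nat set)" by (rule neq_by[of 2]) simp_all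
lemma neq3_38: "({0,3}::nat set) ~= ({3}::nat set)" by (rule neq_by2[of 0]) simp_all
lemma neq3_39: "({0,3}::nat set) ~= ({0,2}::nat set)" by (rule neq_by[of 2]) simp_all
lemma neq3_40: "({0,3}::nat set) ~= ({2,3}::nat set)" by (rule neq_by[of 2]) simp_all
lemma neq3_41: "({0,3}::nat set) ~= ({0,2,3}::nat set)" by (rule neq_by[of 2]) simp_all
lemma neq3_42: "({2,3}::nat set) ~= ({}::nat set)" by (rule neq_by2[of 2]) simp_all
lemma neq3_43: "({2,3}::nat set) ~= ({0}::nat set)" by (rule neq_by[of 0]) simp_all
lemma neq3_44: "({2,3}::nat set) ~= ({2}::nat set)" by (rule neq_by2[of 3]) simp_all
lemma neq3_45: "({2,3}::nat set) ~= ({3}::nat set)" by (rule neq_by2[of 2]) simp_all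
lemma neq3_46: "({2,3}::nat set) ~= ({0,2}::nat set)" by (rule neq_by[of 0]) simp_all
lemma neq3_47: "({2,3}::nat set) ~= ({0,3}::nat set)" by (rule neq_by[of 0]) simp_all
lemma neq3_48: "({2,3}::nat set) ~= ({0,2,3}::nat set)" by (rule neq_by[of 0]) simp_all
lemma neq3_49: "({0,2,3}::nat set) ~= ({}::nat set)" by (rule neq_by2[of 0]) simp_all
lemma neq3_50: "({0,2,3}::nat set) ~= ({0}::nat set)" by (rule neq_by2[of 2]) simp_all
lemma neq3_51: "({0,2,3}::nat set) ~= ({2}::nat set)" by (rule neq_by2[of 0]) simp_all
lemma neq3_52: "({0,2,3}::nat set) ~= ({3}::nat set)" by (rule neq_by2[of 0]) simp_all
lemma neq3_53: "({0,2,3}::nat set) ~= ({0,2}::nat set)" by (rule neq_by2[of 3]) simp_all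
lemma neq3_54: "({0,2,3}::nat set) ~= ({0,3}::nat set)" by (rule neq_by2[of 2]) simp_all
lemma neq3_55: "({0,2,3}::nat set) ~= ({2,3}::nat set)" by (rule neq_by2[of 0]) simp_all
lemmas neq3 = neq3_0 neq3_1 neq3_2 neq3_3 neq3_4 neq3_5 neq3_6 neq3_7 neq3_8 neq3_9 neq3_10 neq3_11 neq3_12 neq3_13 neq3_14 neq3_15 neq3_16 neq3_17 neq3_18 neq3_19 neq3_20 neq3_21 neq3_22 neq3_23 neq3_24 neq3_25 neq3_26 neq3_27 neq3_28 neq3_29 neq3_30 neq3_31 neq3_32 neq3_33 neq3_34 neq3_35 neq3_36 neq3_37 neq3_38 neq3_39 neq3_40 neq3_41 neq3_42 neq3_43 neq3_44 neq3_45 neq3_46 neq3_47 neq3_48 neq3_49 neq3_50 neq3_51 neq3_52 neq3_53 neq3_54 neq3_55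
lemma ingr3: "ingr M3 S3m y x \<longleftrightarrow> (y = 0 & x = 0) | (y = 2 & x = 0) | (y = 3 & x = 0) | (y = 2 & x = 2) | (y = 0 & x = 3) | (y = 3 & x = 3)"
  unfolding ingr_def S3m_def M3_def
  by (simp add: ex_disj_distrib conj_disj_distribL conj_disj_distribR; auto)
lemma I3: "Iel M3 S3m 0 = ({0,2,3}::nat set)" "Iel M3 S3m 2 = ({2}::nat set)" "Iel M3 S3m (Suc (Suc 0)) = ({2}::nat set)" "Iel M3 S3m 3 = ({0,3}::nat set)"
  unfolding Iel_def ingr3 by (auto simp: M3_def)
lemma ov3: "s_overlaps M3 S3m x y \<longleftrightarrow> (x = 0 & y = 0) | (x = 0 & y = 2) | (x = 0 & y = 3) | (x = 2 & y = 0) | (x = 2 & y = 2) | (x = 3 & y = 0) | (x = 3 & y = 3)"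
  unfolding s_overlaps_def S3m_def M3_def
  by (simp add: ex_disj_distrib conj_disj_distribL conj_disj_distribR; auto)
lemma S1_3: "S1 M3 S3m"
  unfolding S1_def
proof (intro allI impI)
  fix X assume "X <= M3 & X ~= {}"
  hence "X <= M3" "X ~= {}" by auto
  from sub3[OF this(1)] this(2) show "EX x:M3. S3m x X"
    by (elim disjE) (auto simp: M3_def S3m_def)
qed
lemma S2_3: "S2 M3 S3m"
  unfolding S2_def
proof (intro ballI allI impI)
  fix x y X assume "x : M3" "y : M3" "X <= M3" "S3m x X & S3m y X"
  thus "x = y" unfolding S3m_def by (elim conjE disjE; simp add: neq3)
qed
lemma notS3_3: "~ S3 M3 S3m"
proof
  assume H: "S3 M3 S3m"
  have "S3m 3 (({2,3}::nat set) Un ({0,3}::nat set))"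
    by (rule H[unfolded S3_def, rule_format, of 0 3 "({2,3}::nat set)" "({0,3}::nat set)"]) (simp_all add: mem3 S3m_def I3 pre_dense_def ov3)
  moreover have "({2,3}::nat set) Un ({0,3}::nat set) = ({0,2,3}::nat set)" by auto
  ultimately have "S3m 3 ({0,2,3}::nat set)" by simp
  thus False by (simp add: S3m_def neq3)
qed
lemma S4_3: "S4 M3 S3m"
  unfolding S4_def
proof (intro ballI allI impI)
  fix x y X Y assume "x : M3" "y : M3" "X <= M3" "Y <= M3" "S3m x X & S3m x Y & y : Y"
  hence "EX z:X. s_overlaps M3 S3m z y" by (auto simp: S3m_def ov3)
  thus "EX z:X. EX Z U. Z <= M3 & U <= M3 & S3m z Z & S3m y U & Z Int U ~= {}"
    unfolding s_overlaps_def by blast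
qed
lemma c3_0_: "pre_dense M3 S3m ({}::nat set) (Iel M3 S3m 0) ==> S3m 0 (Iel M3 S3m 0 Int Iset M3 S3m ({}::nat set))"
by (auto simp: pre_dense_def I3 ov3)
lemma c3_0_0: "pre_dense M3 S3m ({0}::nat set) (Iel M3 S3m 0) ==> S3m 0 (Iel M3 S3m 0 Int Iset M3 S3m ({0}::nat set))"
proof -
  have "Iel M3 S3m 0 Int Iset M3 S3m ({0}::nat set) = ({0,2,3}::nat set)" by (simp add: I3 Iset_def; auto)
  moreover have "S3m 0 ({0,2,3}::nat set)" by (simp add: S3m_def)
  ultimately show ?thesis by simp
qed
lemma c3_0_2: "pre_dense M3 S3m ({2}::nat set) (Iel M3 S3m 0) ==> S3m 0 (Iel M3 S3m 0 Int Iset M3 S3m ({2}::nat set))"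
by (auto simp: pre_dense_def I3 ov3)
lemma c3_0_3: "pre_dense M3 S3m ({3}::nat set) (Iel M3 S3m 0) ==> S3m 0 (Iel M3 S3m 0 Int Iset M3 S3m ({3}::nat set))"
by (auto simp: pre_dense_def I3 ov3)
lemma c3_0_02: "pre_dense M3 S3m ({0,2}::nat set) (Iel M3 S3m 0) ==> S3m 0 (Iel M3 S3m 0 Int Iset M3 S3m ({0,2}::nat set))"
proof -
  have "Iel M3 S3m 0 Int Iset M3 S3m ({0,2}::nat set) = ({0,2,3}::nat set)" by (simp add: I3 Iset_def; auto)
  moreover have "S3m 0 ({0,2,3}::nat set)" by (simp add: S3m_def)
  ultimately show ?thesis by simp
qed
lemma c3_0_03: "pre_dense M3 S3m ({0,3}::nat set) (Iel M3 S3m 0) ==> S3m 0 (Iel M3 S3m 0 Int Iset M3 S3m ({0,3}::nat set))"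
proof -
  have "Iel M3 S3m 0 Int Iset M3 S3m ({0,3}::nat set) = ({0,2,3}::nat set)" by (simp add: I3 Iset_def; auto)
  moreover have "S3m 0 ({0,2,3}::nat set)" by (simp add: S3m_def)
  ultimately show ?thesis by simp
qed
lemma c3_0_23: "pre_dense M3 S3m ({2,3}::nat set) (Iel M3 S3m 0) ==> S3m 0 (Iel M3 S3m 0 Int Iset M3 S3m ({2,3}::nat set))"
proof -
  have "Iel M3 S3m 0 Int Iset M3 S3m ({2,3}::nat set) = ({0,2,3}::nat set)" by (simp add: I3 Iset_def; auto)
  moreover have "S3m 0 ({0,2,3}::nat set)" by (simp add: S3m_def)
  ultimately show ?thesis by simp
qed
lemma c3_0_023: "pre_dense M3 S3m ({0,2,3}::nat set) (Iel M3 S3m 0) ==> S3m 0 (Iel M3 S3m 0 Int Iset M3 S3m ({0,2,3}::nat set))"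
proof -
  have "Iel M3 S3m 0 Int Iset M3 S3m ({0,2,3}::nat set) = ({0,2,3}::nat set)" by (simp add: I3 Iset_def; auto)
  moreover have "S3m 0 ({0,2,3}::nat set)" by (simp add: S3m_def)
  ultimately show ?thesis by simp
qed
lemma c3_2_: "pre_dense M3 S3m ({}::nat set) (Iel M3 S3m 2) ==> S3m 2 (Iel M3 S3m 2 Int Iset M3 S3m ({}::nat set))"
by (auto simp: pre_dense_def I3 ov3)
lemma c3_2_0: "pre_dense M3 S3m ({0}::nat set) (Iel M3 S3m 2) ==> S3m 2 (Iel M3 S3m 2 Int Iset M3 S3m ({0}::nat set))"
proof -
  have "Iel M3 S3m 2 Int Iset M3 S3m ({0}::nat set) = ({2}::nat set)" by (simp add: I3 Iset_def; auto)
  moreover have "S3m 2 ({2}::nat set)" by (simp add: S3m_def)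
  ultimately show ?thesis by simp
qed
lemma c3_2_2: "pre_dense M3 S3m ({2}::nat set) (Iel M3 S3m 2) ==> S3m 2 (Iel M3 S3m 2 Int Iset M3 S3m ({2}::nat set))"
proof -
  have "Iel M3 S3m 2 Int Iset M3 S3m ({2}::nat set) = ({2}::nat set)" by (simp add: I3 Iset_def; auto)
  moreover have "S3m 2 ({2}::nat set)" by (simp add: S3m_def)
  ultimately show ?thesis by simp
qed
lemma c3_2_3: "pre_dense M3 S3m ({3}::nat set) (Iel M3 S3m 2) ==> S3m 2 (Iel M3 S3m 2 Int Iset M3 S3m ({3}::nat set))"
by (auto simp: pre_dense_def I3 ov3)
lemma c3_2_02: "pre_dense M3 S3m ({0,2}::nat set) (Iel M3 S3m 2) ==> S3m 2 (Iel M3 S3m 2 Int Iset M3 S3m ({0,2}::nat set))"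
proof -
  have "Iel M3 S3m 2 Int Iset M3 S3m ({0,2}::nat set) = ({2}::nat set)" by (simp add: I3 Iset_def; auto)
  moreover have "S3m 2 ({2}::nat set)" by (simp add: S3m_def)
  ultimately show ?thesis by simp
qed
lemma c3_2_03: "pre_dense M3 S3m ({0,3}::nat set) (Iel M3 S3m 2) ==> S3m 2 (Iel M3 S3m 2 Int Iset M3 S3m ({0,3}::nat set))"
proof -
  have "Iel M3 S3m 2 Int Iset M3 S3m ({0,3}::nat set) = ({2}::nat set)" by (simp add: I3 Iset_def; auto)
  moreover have "S3m 2 ({2}::nat set)" by (simp add: S3m_def)
  ultimately show ?thesis by simp
qed
lemma c3_2_23: "pre_dense M3 S3m ({2,3}::nat set) (Iel M3 S3m 2) ==> S3m 2 (Iel M3 S3m 2 Int Iset M3 S3m ({2,3}::nat set))"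
proof -
  have "Iel M3 S3m 2 Int Iset M3 S3m ({2,3}::nat set) = ({2}::nat set)" by (simp add: I3 Iset_def; auto)
  moreover have "S3m 2 ({2}::nat set)" by (simp add: S3m_def)
  ultimately show ?thesis by simp
qed
lemma c3_2_023: "pre_dense M3 S3m ({0,2,3}::nat set) (Iel M3 S3m 2) ==> S3m 2 (Iel M3 S3m 2 Int Iset M3 S3m ({0,2,3}::nat set))"
proof -
  have "Iel M3 S3m 2 Int Iset M3 S3m ({0,2,3}::nat set) = ({2}::nat set)" by (simp add: I3 Iset_def; auto)
  moreover have "S3m 2 ({2}::nat set)" by (simp add: S3m_def)
  ultimately show ?thesis by simp
qed
lemma c3_3_: "pre_dense M3 S3m ({}::nat set) (Iel M3 S3m 3) ==> S3m 3 (Iel M3 S3m 3 Int Iset M3 S3m ({}::nat set))"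
by (auto simp: pre_dense_def I3 ov3)
lemma c3_3_0: "pre_dense M3 S3m ({0}::nat set) (Iel M3 S3m 3) ==> S3m 3 (Iel M3 S3m 3 Int Iset M3 S3m ({0}::nat set))"
proof -
  have "Iel M3 S3m 3 Int Iset M3 S3m ({0}::nat set) = ({0,3}::nat set)" by (simp add: I3 Iset_def; auto)
  moreover have "S3m 3 ({0,3}::nat set)" by (simp add: S3m_def)
  ultimately show ?thesis by simp
qed
lemma c3_3_2: "pre_dense M3 S3m ({2}::nat set) (Iel M3 S3m 3) ==> S3m 3 (Iel M3 S3m 3 Int Iset M3 S3m ({2}::nat set))"
by (auto simp: pre_dense_def I3 ov3)
lemma c3_3_3: "pre_dense M3 S3m ({3}::nat set) (Iel M3 S3m 3) ==> S3m 3 (Iel M3 S3m 3 Int Iset M3 S3m ({3}::nat set))"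
proof -
  have "Iel M3 S3m 3 Int Iset M3 S3m ({3}::nat set) = ({0,3}::nat set)" by (simp add: I3 Iset_def; auto)
  moreover have "S3m 3 ({0,3}::nat set)" by (simp add: S3m_def)
  ultimately show ?thesis by simp
qed
lemma c3_3_02: "pre_dense M3 S3m ({0,2}::nat set) (Iel M3 S3m 3) ==> S3m 3 (Iel M3 S3m 3 Int Iset M3 S3m ({0,2}::nat set))"
proof -
  have "Iel M3 S3m 3 Int Iset M3 S3m ({0,2}::nat set) = ({0,3}::nat set)" by (simp add: I3 Iset_def; auto)
  moreover have "S3m 3 ({0,3}::nat set)" by (simp add: S3m_def)
  ultimately show ?thesis by simp
qed
lemma c3_3_03: "pre_dense M3 S3m ({0,3}::nat set) (Iel M3 S3m 3) ==> S3m 3 (Iel M3 S3m 3 Int Iset M3 S3m ({0,3}::nat set))"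
proof -
  have "Iel M3 S3m 3 Int Iset M3 S3m ({0,3}::nat set) = ({0,3}::nat set)" by (simp add: I3 Iset_def; auto)
  moreover have "S3m 3 ({0,3}::nat set)" by (simp add: S3m_def)
  ultimately show ?thesis by simp
qed
lemma c3_3_23: "pre_dense M3 S3m ({2,3}::nat set) (Iel M3 S3m 3) ==> S3m 3 (Iel M3 S3m 3 Int Iset M3 S3m ({2,3}::nat set))"
proof -
  have "Iel M3 S3m 3 Int Iset M3 S3m ({2,3}::nat set) = ({0,3}::nat set)" by (simp add: I3 Iset_def; auto)
  moreover have "S3m 3 ({0,3}::nat set)" by (simp add: S3m_def)
  ultimately show ?thesis by simp
qed
lemma c3_3_023: "pre_dense M3 S3m ({0,2,3}::nat set) (Iel M3 S3m 3) ==> S3m 3 (Iel M3 S3m 3 Int Iset M3 S3m ({0,2,3}::nat set))"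
proof -
  have "Iel M3 S3m 3 Int Iset M3 S3m ({0,2,3}::nat set) = ({0,3}::nat set)" by (simp add: I3 Iset_def; auto)
  moreover have "S3m 3 ({0,3}::nat set)" by (simp add: S3m_def)
  ultimately show ?thesis by simp
qed
lemma S5_3: "S5 M3 S3m"
  unfolding S5_def
proof (intro ballI allI impI)
  fix x X assume x: "x : M3" and X: "X <= M3" and pd: "pre_dense M3 S3m X (Iel M3 S3m x)"
  from x have x': "(x = 0) | (x = 2) | (x = 3)" by (simp add: M3_def)
  show "S3m x (Iel M3 S3m x Int Iset M3 S3m X)"
  using x' proof (elim disjE)
    assume xa: "x = 0"
    from sub3[OF X] show ?thesis proof (elim disjE)
      assume "X = ({}::nat set)"
      with xa pd show ?thesis by (simp only:) (erule c3_0_)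
    next
      assume "X = ({0}::nat set)"
      with xa pd show ?thesis by (simp only:) (erule c3_0_0)
    next
      assume "X = ({2}::nat set)"
      with xa pd show ?thesis by (simp only:) (erule c3_0_2)
    next
      assume "X = ({3}::nat set)"
      with xa pd show ?thesis by (simp only:) (erule c3_0_3)
    next
      assume "X = ({0,2}::nat set)"
      with xa pd show ?thesis by (simp only:) (erule c3_0_02)
    next
      assume "X = ({0,3}::nat set)"
      with xa pd show ?thesis by (simp only:) (erule c3_0_03)
    next
      assume "X = ({2,3}::nat set)"
      with xa pd show ?thesis by (simp only:) (erule c3_0_23)
    next
      assume "X = ({0,2,3}::nat set)"
      with xa pd show ?thesis by (simp only:) (erule c3_0_023)
    qed
  next
    assume xa: "x = 2"
    from sub3[OF X] show ?thesis proof (elim disjE)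
      assume "X = ({}::nat set)"
      with xa pd show ?thesis by (simp only:) (erule c3_2_)
    next
      assume "X = ({0}::nat set)"
      with xa pd show ?thesis by (simp only:) (erule c3_2_0)
    next
      assume "X = ({2}::nat set)"
      with xa pd show ?thesis by (simp only:) (erule c3_2_2)
    next
      assume "X = ({3}::nat set)"
      with xa pd show ?thesis by (simp only:) (erule c3_2_3)
    next
      assume "X = ({0,2}::nat set)"
      with xa pd show ?thesis by (simp only:) (erule c3_2_02)
    next
      assume "X = ({0,3}::nat set)"
      with xa pd show ?thesis by (simp only:) (erule c3_2_03)
    next
      assume "X = ({2,3}::nat set)"
      with xa pd show ?thesis by (simp only:) (erule c3_2_23)
    next
      assume "X = ({0,2,3}::nat set)"
      with xa pd show ?thesis by (simp only:) (erule c3_2_023)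
    qed
  next
    assume xa: "x = 3"
    from sub3[OF X] show ?thesis proof (elim disjE)
      assume "X = ({}::nat set)"
      with xa pd show ?thesis by (simp only:) (erule c3_3_)
    next
      assume "X = ({0}::nat set)"
      with xa pd show ?thesis by (simp only:) (erule c3_3_0)
    next
      assume "X = ({2}::nat set)"
      with xa pd show ?thesis by (simp only:) (erule c3_3_2)
    next
      assume "X = ({3}::nat set)"
      with xa pd show ?thesis by (simp only:) (erule c3_3_3)
    next
      assume "X = ({0,2}::nat set)"
      with xa pd show ?thesis by (simp only:) (erule c3_3_02)
    next
      assume "X = ({0,3}::nat set)"
      with xa pd show ?thesis by (simp only:) (erule c3_3_03)
    next
      assume "X = ({2,3}::nat set)"
      with xa pd show ?thesis by (simp only:) (erule c3_3_23)
    next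
      assume "X = ({0,2,3}::nat set)"
      with xa pd show ?thesis by (simp only:) (erule c3_3_023)
    qed
  qed
qed

definition M4 :: "nat set" where "M4 = ({0}::nat set)"
definition S4m :: "nat => nat set => bool" where "S4m x X = ((x = 0 & X = ({}::nat set)) | (x = 0 & X = ({0}::nat set)))"
lemma mem4: "x : M4 \<longleftrightarrow> (x = 0)" by (auto simp: M4_def)
lemma sub4: "X <= M4 ==> (X = ({}::nat set)) | (X = ({0}::nat set))"
proof -
  assume "X <= M4"
  hence "X : Pow ({0}::nat set)" by (simp add: M4_def)
  thus ?thesis by (simp add: Pow_insert insert_commute; (elim disjE; simp))
qed
lemma str4: "is_structure M4 S4m" by (auto simp: is_structure_def M4_def S4m_def)
lemma neq4_0: "({}::nat set) ~= ({0}::nat set)" by (rule neq_by[of 0]) simp_all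
lemma neq4_1: "({0}::nat set) ~= ({}::nat set)" by (rule neq_by2[of 0]) simp_all
lemmas neq4 = neq4_0 neq4_1
lemma ingr4: "ingr M4 S4m y x \<longleftrightarrow> (y = 0 & x = 0)"
  unfolding ingr_def S4m_def M4_def
  by (simp add: ex_disj_distrib conj_disj_distribL conj_disj_distribR; auto)
lemma I4: "Iel M4 S4m 0 = ({0}::nat set)"
  unfolding Iel_def ingr4 by (auto simp: M4_def)
lemma ov4: "s_overlaps M4 S4m x y \<longleftrightarrow> (x = 0 & y = 0)"
  unfolding s_overlaps_def S4m_def M4_def
  by (simp add: ex_disj_distrib conj_disj_distribL conj_disj_distribR; auto)
lemma S1_4: "S1 M4 S4m"
  unfolding S1_def
proof (intro allI impI)
  fix X assume "X <= M4 & X ~= {}"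
  hence "X <= M4" "X ~= {}" by auto
  from sub4[OF this(1)] this(2) show "EX x:M4. S4m x X"
    by (elim disjE) (auto simp: M4_def S4m_def)
qed
lemma S2_4: "S2 M4 S4m"
  unfolding S2_def
proof (intro ballI allI impI)
  fix x y X assume "x : M4" "y : M4" "X <= M4" "S4m x X & S4m y X"
  thus "x = y" unfolding S4m_def by (elim conjE disjE; simp add: neq4)
qed
lemma S3_4: "S3 M4 S4m"
  unfolding S3_def S4m_def M4_def by auto
lemma notS4_4: "~ S4 M4 S4m"
proof
  assume H: "S4 M4 S4m"
  have "(EX z:({}::nat set). EX Z U. Z <= M4 & U <= M4 & S4m z Z & S4m 0 U & Z Int U ~= {})"
    by (rule H[unfolded S4_def, rule_format, of 0 0 "({}::nat set)" "({0}::nat set)"]) (simp_all add: mem4 S4m_def I4 pre_dense_def ov4)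
  thus False by (simp add: M4_def S4m_def I4 pre_dense_def ov4 Iset_def neq4)
qed
lemma c4_0_: "pre_dense M4 S4m ({}::nat set) (Iel M4 S4m 0) ==> S4m 0 (Iel M4 S4m 0 Int Iset M4 S4m ({}::nat set))"
by (auto simp: pre_dense_def I4 ov4)
lemma c4_0_0: "pre_dense M4 S4m ({0}::nat set) (Iel M4 S4m 0) ==> S4m 0 (Iel M4 S4m 0 Int Iset M4 S4m ({0}::nat set))"
proof -
  have "Iel M4 S4m 0 Int Iset M4 S4m ({0}::nat set) = ({0}::nat set)" by (simp add: I4 Iset_def; auto)
  moreover have "S4m 0 ({0}::nat set)" by (simp add: S4m_def)
  ultimately show ?thesis by simp
qed
lemma S5_4: "S5 M4 S4m"
  unfolding S5_def
proof (intro ballI allI impI)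
  fix x X assume x: "x : M4" and X: "X <= M4" and pd: "pre_dense M4 S4m X (Iel M4 S4m x)"
  from x have x': "(x = 0)" by (simp add: M4_def)
  show "S4m x (Iel M4 S4m x Int Iset M4 S4m X)"
  proof -
    note xa = x'
    from sub4[OF X] show ?thesis proof (elim disjE)
      assume "X = ({}::nat set)"
      with xa pd show ?thesis by (simp only:) (erule c4_0_)
    next
      assume "X = ({0}::nat set)"
      with xa pd show ?thesis by (simp only:) (erule c4_0_0)
    qed
  qed
qed

definition M5 :: "nat set" where "M5 = ({0,3}::nat set)"
definition S5m :: "nat => nat set => bool" where "S5m x X = ((x = 0 & X = ({0}::nat set)) | (x = 0 & X = ({0,3}::nat set)) | (x = 3 & X = ({3}::nat set)))"
lemma mem5: "x : M5 \<longleftrightarrow> (x = 0) | (x = 3)" by (auto simp: M5_def)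
lemma sub5: "X <= M5 ==> (X = ({}::nat set)) | (X = ({0}::nat set)) | (X = ({3}::nat set)) | (X = ({0,3}::nat set))"
proof -
  assume "X <= M5"
  hence "X : Pow ({0,3}::nat set)" by (simp add: M5_def)
  thus ?thesis by (simp add: Pow_insert insert_commute; (elim disjE; simp))
qed
lemma str5: "is_structure M5 S5m" by (auto simp: is_structure_def M5_def S5m_def)
lemma neq5_0: "({}::nat set) ~= ({0}::nat set)" by (rule neq_by[of 0]) simp_all
lemma neq5_1: "({}::nat set) ~= ({3}::nat set)" by (rule neq_by[of 3]) simp_all
lemma neq5_2: "({}::nat set) ~= ({0,3}::nat set)" by (rule neq_by[of 0]) simp_all
lemma neq5_3: "({0}::nat set) ~= ({}::nat set)" by (rule neq_by2[of 0]) simp_all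
lemma neq5_4: "({0}::nat set) ~= ({3}::nat set)" by (rule neq_by[of 3]) simp_all
lemma neq5_5: "({0}::nat set) ~= ({0,3}::nat set)" by (rule neq_by[of 3]) simp_all
lemma neq5_6: "({3}::nat set) ~= ({}::nat set)" by (rule neq_by2[of 3]) simp_all
lemma neq5_7: "({3}::nat set) ~= ({0}::nat set)" by (rule neq_by[of 0]) simp_all
lemma neq5_8: "({3}::nat set) ~= ({0,3}::nat set)" by (rule neq_by[of 0]) simp_all
lemma neq5_9: "({0,3}::nat set) ~= ({}::nat set)" by (rule neq_by2[of 0]) simp_all
lemma neq5_10: "({0,3}::nat set) ~= ({0}::nat set)" by (rule neq_by2[of 3]) simp_all
lemma neq5_11: "({0,3}::nat set) ~= ({3}::nat set)" by (rule neq_by2[of 0]) simp_all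
lemmas neq5 = neq5_0 neq5_1 neq5_2 neq5_3 neq5_4 neq5_5 neq5_6 neq5_7 neq5_8 neq5_9 neq5_10 neq5_11
lemma ingr5: "ingr M5 S5m y x \<longleftrightarrow> (y = 0 & x = 0) | (y = 3 & x = 0) | (y = 3 & x = 3)"
  unfolding ingr_def S5m_def M5_def
  by (simp add: ex_disj_distrib conj_disj_distribL conj_disj_distribR; auto)
lemma I5: "Iel M5 S5m 0 = ({0,3}::nat set)" "Iel M5 S5m 3 = ({3}::nat set)"
  unfolding Iel_def ingr5 by (auto simp: M5_def)
lemma ov5: "s_overlaps M5 S5m x y \<longleftrightarrow> (x = 0 & y = 0) | (x = 0 & y = 3) | (x = 3 & y = 0) | (x = 3 & y = 3)"
  unfolding s_overlaps_def S5m_def M5_def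
  by (simp add: ex_disj_distrib conj_disj_distribL conj_disj_distribR; auto)
lemma S1_5: "S1 M5 S5m"
  unfolding S1_def
proof (intro allI impI)
  fix X assume "X <= M5 & X ~= {}"
  hence "X <= M5" "X ~= {}" by auto
  from sub5[OF this(1)] this(2) show "EX x:M5. S5m x X"
    by (elim disjE) (auto simp: M5_def S5m_def)
qed
lemma S2_5: "S2 M5 S5m"
  unfolding S2_def
proof (intro ballI allI impI)
  fix x y X assume "x : M5" "y : M5" "X <= M5" "S5m x X & S5m y X"
  thus "x = y" unfolding S5m_def by (elim conjE disjE; simp add: neq5)
qed
lemma S3_5: "S3 M5 S5m"
  unfolding S3_def S5m_def M5_def by auto
lemma S4_5: "S4 M5 S5m"
  unfolding S4_def
proof (intro ballI allI impI)
  fix x y X Y assume "x : M5" "y : M5" "X <= M5" "Y <= M5" "S5m x X & S5m x Y & y : Y"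
  hence "EX z:X. s_overlaps M5 S5m z y" by (auto simp: S5m_def ov5)
  thus "EX z:X. EX Z U. Z <= M5 & U <= M5 & S5m z Z & S5m y U & Z Int U ~= {}"
    unfolding s_overlaps_def by blast
qed
lemma notS5_5: "~ S5 M5 S5m"
proof
  assume H: "S5 M5 S5m"
  have "S5m 0 (Iel M5 S5m 0 Int Iset M5 S5m ({3}::nat set))"
    by (rule H[unfolded S5_def, rule_format, of 0 "({3}::nat set)"]) (simp_all add: mem5 S5m_def I5 pre_dense_def ov5)
  moreover have "Iel M5 S5m 0 Int Iset M5 S5m ({3}::nat set) = ({3}::nat set)" by (simp add: I5 Iset_def; auto)
  ultimately have "S5m 0 ({3}::nat set)" by simp
  thus False by (simp add: S5m_def neq5)
qed

lemma enum5: "(j::nat) \<in> {1..5} \<Longrightarrow> j = 1 \<or> j = 2 \<or> j = 3 \<or> j = 4 \<or> j = 5" by auto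

lemmas allax = str1 notS1_1 S2_1 S3_1 S4_1 S5_1 str2 S1_2 notS2_2 S3_2 S4_2 S5_2
  str3 S1_3 S2_3 notS3_3 S4_3 S5_3 str4 S1_4 S2_4 S3_4 notS4_4 S5_4
  str5 S1_5 S2_5 S3_5 S4_5 notS5_5

lemma model_ok:
  fixes M :: "nat set"
  assumes "is_structure M S" "Sax 1 M S \<or> i = 1" "Sax 2 M S \<or> i = 2" "Sax 3 M S \<or> i = 3"
    "Sax 4 M S \<or> i = 4" "Sax 5 M S \<or> i = 5" "\<not> Sax i M S"
  shows "\<exists>(M' :: nat set) S'. is_structure M' S' \<and>
           (\<forall>j\<in>{1..5::nat}. j \<noteq> i \<longrightarrow> Sax j M' S') \<and> \<not> Sax i M' S'"
proof (rule exI[of _ M], rule exI[of _ S], intro conjI ballI impI)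
  show "is_structure M S" by fact
  show "\<not> Sax i M S" by fact
  fix j :: nat assume "j \<in> {1..5}" "j \<noteq> i"
  with enum5[OF this(1)] assms show "Sax j M S" by auto
qed

theorem theorem5p1:
  shows "\<forall>i\<in>{1..5::nat}. \<exists>(M :: nat set) S. is_structure M S \<and>
           (\<forall>j\<in>{1..5::nat}. j \<noteq> i \<longrightarrow> Sax j M S) \<and> \<not> Sax i M S"
proof
  fix i :: nat assume "i \<in> {1..5}"
  from enum5[OF this] show "\<exists>(M :: nat set) S. is_structure M S \<and>
           (\<forall>j\<in>{1..5::nat}. j \<noteq> i \<longrightarrow> Sax j M S) \<and> \<not> Sax i M S"
  proof (elim disjE)
    assume "i = 1" thus ?thesis by (intro model_ok[of M1 S1m]) (simp_all add: Sax_def allax)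
  next
    assume "i = 2" thus ?thesis by (intro model_ok[of M2 S2m]) (simp_all add: Sax_def allax)
  next
    assume "i = 3" thus ?thesis by (intro model_ok[of M3 S3m]) (simp_all add: Sax_def allax)
  next
    assume "i = 4" thus ?thesis by (intro model_ok[of M4 S4m]) (simp_all add: Sax_def allax)
  next
    assume "i = 5" thus ?thesis by (intro model_ok[of M5 S5m]) (simp_all add: Sax_def allax)
  qed
qed

end
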